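(* Let $G$ be a red-blue colouring of $K_n$, let $u \in V(G)$, and let $A_1, \ldots, A_5$ be pairwise disjoint non-empty subsets of $V(G) \setminus \{u\}$ such that $(A_1, \ldots, A_5)$ is a pentagon blow-up in $G$. Suppose that there are $t$ pairwise disjoint bad configurations in $(A_1,\dots,A_5)$ with respect to $u$, but no $t+1$ pairwise disjoint such bad configurations, where $t < \min_{i \in [5]} |A_i|$. Then there exists $i \in [5]$ such that $(A_i \cup \{u\}, A_{i+1}, \ldots, A_{i+4})$ is exactly $t$ edge-flips away from a pentagon blow-up.
   Context: A red-blue colouring of $K_n$ assigns red or blue to each edge of the complete graph on the $n$-vertex set $V(G)$. For pairwise disjoint non-empty sets $B_1,\dots,B_5 \subseteq V(G)$, $(B_1,\dots,B_5)$ is a pentagon blow-up if for every $i \in [5]$ all edges between $B_i$ and $B_{i+1}$ are red and all edges between $B_i$ and $B_{i+2}$ are blue (indices modulo 5); it is exactly $t$ edge-flips away from a pentagon blow-up if exactly $t$ of the edges between distinct sets $B_i, B_j$ have a colour different from the one required by this condition (so changing the colours of these $t$ edges makes it a pentagon blow-up). For $u \notin A_1\cup\dots\cup A_5$, a bad configuration in $(A_1,\dots,A_5)$ with respect to $u$ is either a set of three red neighbours of $u$, one from each of $A_i, A_{i+2}, A_{i+3}$ for some $i \in [5]$, or a set of three blue neighbours of $u$, one from each of $A_i, A_{i+1}, A_{i+2}$ for some $i \in [5]$. *)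

theory Defs
  imports Main
begin

text \<open>A red-blue colouring of the complete graph on the finite vertex set V:
  red x y means the edge xy is red; for distinct x, y the edge is blue iff not red x y.
  Indices of the five parts are taken from {0..<5}, arithmetic modulo 5.\<close>

definition red_blue_colouring :: "'a set \<Rightarrow> ('a \<Rightarrow> 'a \<Rightarrow> bool) \<Rightarrow> bool" where
  "red_blue_colouring V red \<longleftrightarrow> finite V \<and> (\<forall>x\<in>V. \<forall>y\<in>V. red x y = red y x)"

definition parts_ok :: "'a set \<Rightarrow> (nat \<Rightarrow> 'a set) \<Rightarrow> bool" where
  "parts_ok V B \<longleftrightarrow> (\<forall>i<5. B i \<noteq> {} \<and> B i \<subseteq> V) \<and>
     (\<forall>i<5. \<forall>j<5. i \<noteq> j \<longrightarrow> B i \<inter> B j = {})"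

definition pentagon_blowup :: "'a set \<Rightarrow> ('a \<Rightarrow> 'a \<Rightarrow> bool) \<Rightarrow> (nat \<Rightarrow> 'a set) \<Rightarrow> bool" where
  "pentagon_blowup V red B \<longleftrightarrow> parts_ok V B \<and>
     (\<forall>i<5. (\<forall>x\<in>B i. \<forall>y\<in>B ((i+1) mod 5). red x y) \<and>
            (\<forall>x\<in>B i. \<forall>y\<in>B ((i+2) mod 5). \<not> red x y))"

text \<open>The set of edges between distinct parts whose colour differs from the required one.
  Every pair of distinct indices mod 5 is of the form (i, i+1) or (i, i+2).\<close>
definition wrong_edges :: "('a \<Rightarrow> 'a \<Rightarrow> bool) \<Rightarrow> (nat \<Rightarrow> 'a set) \<Rightarrow> 'a set set" where
  "wrong_edges red B = {{x, y} | x y. \<exists>i<5.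
      (x \<in> B i \<and> y \<in> B ((i+1) mod 5) \<and> \<not> red x y) \<or>
      (x \<in> B i \<and> y \<in> B ((i+2) mod 5) \<and> red x y)}"

definition flips_away :: "'a set \<Rightarrow> ('a \<Rightarrow> 'a \<Rightarrow> bool) \<Rightarrow> (nat \<Rightarrow> 'a set) \<Rightarrow> nat \<Rightarrow> bool" where
  "flips_away V red B t \<longleftrightarrow> parts_ok V B \<and> card (wrong_edges red B) = t"

definition bad_configuration ::
  "('a \<Rightarrow> 'a \<Rightarrow> bool) \<Rightarrow> (nat \<Rightarrow> 'a set) \<Rightarrow> 'a \<Rightarrow> 'a set \<Rightarrow> bool" where
  "bad_configuration red A u S \<longleftrightarrow> (\<exists>i<5. \<exists>a b c. S = {a, b, c} \<and>
      ((a \<in> A i \<and> b \<in> A ((i+2) mod 5) \<and> c \<in> A ((i+3) mod 5) \<and>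
          red u a \<and> red u b \<and> red u c) \<or>
       (a \<in> A i \<and> b \<in> A ((i+1) mod 5) \<and> c \<in> A ((i+2) mod 5) \<and>
          \<not> red u a \<and> \<not> red u b \<and> \<not> red u c)))"

definition disjoint_bad_family ::
  "('a \<Rightarrow> 'a \<Rightarrow> bool) \<Rightarrow> (nat \<Rightarrow> 'a set) \<Rightarrow> 'a \<Rightarrow> 'a set set \<Rightarrow> bool" where
  "disjoint_bad_family red A u F \<longleftrightarrow>
     finite F \<and> (\<forall>S\<in>F. bad_configuration red A u S) \<and> pairwise disjnt F"

end

theory Submission
  imports Defs
begin

lemma tri: "1 \<le> (x::nat) + y \<Longrightarrow> (x = 0 \<Longrightarrow> 0 < y \<Longrightarrow> P) \<Longrightarrow> (0 < x \<Longrightarrow> y = 0 \<Longrightarrow> P) \<Longrightarrow> (0 < x \<Longrightarrow> 0 < y \<Longrightarrow> P) \<Longrightarrow> P"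
  by (cases "x = 0"; cases "y = 0") auto

lemma arith_core:
  fixes ra rb rc rd re ba bb bc bd be s :: nat
  assumes "1 \<le> s"
   "s \<le> ra + ba" "s \<le> rb + bb" "s \<le> rc + bc" "s \<le> rd + bd" "s \<le> re + be"
   "s \<le> rc + rd + bb + be"
   "s \<le> rd + re + bc + ba"
   "s \<le> re + ra + bd + bb"
   "s \<le> ra + rb + be + bc"
   "s \<le> rb + rc + ba + bd"
   "0<ra \<and> 0<rc \<and> 0<rd \<longrightarrow> rc + rd + bb + be \<le> s"
   "0<rb \<and> 0<rd \<and> 0<re \<longrightarrow> rd + re + bc + ba \<le> s"
   "0<rc \<and> 0<re \<and> 0<ra \<longrightarrow> re + ra + bd + bb \<le> s"
   "0<rd \<and> 0<ra \<and> 0<rb \<longrightarrow> ra + rb + be + bc \<le> s"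
   "0<re \<and> 0<rb \<and> 0<rc \<longrightarrow> rb + rc + ba + bd \<le> s"
   "0<ba \<and> 0<bb \<and> 0<bc \<longrightarrow> rd + re + bc + ba \<le> s"
   "0<bb \<and> 0<bc \<and> 0<bd \<longrightarrow> re + ra + bd + bb \<le> s"
   "0<bc \<and> 0<bd \<and> 0<be \<longrightarrow> ra + rb + be + bc \<le> s"
   "0<bd \<and> 0<be \<and> 0<ba \<longrightarrow> rb + rc + ba + bd \<le> s"
   "0<be \<and> 0<ba \<and> 0<bb \<longrightarrow> rc + rd + bb + be \<le> s"
  shows False
proof -
  have ka: "1 \<le> ra + ba" and kb: "1 \<le> rb + bb" and kc: "1 \<le> rc + bc" and kd: "1 \<le> rd + bd" and ke: "1 \<le> re + be"
    using assms(1-6) by linarith+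
  show False
    apply (insert assms(12-21))
    by (rule tri[OF ka]; rule tri[OF kb]; rule tri[OF kc]; rule tri[OF kd]; rule tri[OF ke];
        simp only: simp_thms less_irrefl_nat; use assms(1-11) in linarith)
qed

lemma less5_cases: "(j::nat) < 5 \<Longrightarrow> j = 0 \<or> j = 1 \<or> j = 2 \<or> j = 3 \<or> j = 4"
  by auto

definition Rd :: "('a \<Rightarrow> 'a \<Rightarrow> bool) \<Rightarrow> 'a \<Rightarrow> (nat \<Rightarrow> 'a set) \<Rightarrow> nat \<Rightarrow> 'a set" where
  "Rd red u A k = {x \<in> A k. red u x}"
definition Bl :: "('a \<Rightarrow> 'a \<Rightarrow> bool) \<Rightarrow> 'a \<Rightarrow> (nat \<Rightarrow> 'a set) \<Rightarrow> nat \<Rightarrow> 'a set" where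
  "Bl red u A k = {x \<in> A k. \<not> red u x}"
definition W :: "('a \<Rightarrow> 'a \<Rightarrow> bool) \<Rightarrow> 'a \<Rightarrow> (nat \<Rightarrow> 'a set) \<Rightarrow> nat \<Rightarrow> 'a set" where
  "W red u A i = Rd red u A ((i+2) mod 5) \<union> Rd red u A ((i+3) mod 5) \<union>
                 Bl red u A ((i+1) mod 5) \<union> Bl red u A ((i+4) mod 5)"
definition cst :: "('a \<Rightarrow> 'a \<Rightarrow> bool) \<Rightarrow> 'a \<Rightarrow> (nat \<Rightarrow> 'a set) \<Rightarrow> nat \<Rightarrow> nat" where
  "cst red u A i = card (Rd red u A ((i+2) mod 5)) + card (Rd red u A ((i+3) mod 5)) +
                 card (Bl red u A ((i+1) mod 5)) + card (Bl red u A ((i+4) mod 5))"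

definition disj5 :: "(nat \<Rightarrow> 'a set) \<Rightarrow> bool" where
  "disj5 A \<longleftrightarrow> (\<forall>k<5. \<forall>l<5. k \<noteq> l \<longrightarrow> A k \<inter> A l = {})"

lemma memW:
  assumes "disj5 A" "p < 5" "x \<in> A p" "i < 5"
  shows "x \<in> W red u A i \<longleftrightarrow> (red u x \<and> (p = (i+2) mod 5 \<or> p = (i+3) mod 5)) \<or>
           (\<not> red u x \<and> (p = (i+1) mod 5 \<or> p = (i+4) mod 5))"
proof -
  have "x \<in> A k \<longleftrightarrow> k = p" if "k < 5" for k
    using assms that unfolding disj5_def by blast
  then show ?thesis unfolding W_def Rd_def Bl_def by auto
qed

lemma card_W:
  assumes "disj5 A" "\<forall>k<5. finite (A k)" "i < 5"
  shows "card (W red u A i) = cst red u A i"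
proof -
  have fin: "finite (Rd red u A k)" "finite (Bl red u A k)" if "k<5" for k
    using assms(2) that unfolding Rd_def Bl_def by simp_all
  have dRR: "Rd red u A k \<inter> Rd red u A l = {}" if "k<5" "l<5" "k\<noteq>l" for k l
  proof -
    have "A k \<inter> A l = {}" using assms(1) that unfolding disj5_def by simp
    then show ?thesis unfolding Rd_def by auto
  qed
  have dBB: "Bl red u A k \<inter> Bl red u A l = {}" if "k<5" "l<5" "k\<noteq>l" for k l
  proof -
    have "A k \<inter> A l = {}" using assms(1) that unfolding disj5_def by simp
    then show ?thesis unfolding Bl_def by auto
  qed
  have dRB: "Rd red u A k \<inter> Bl red u A l = {}" for k l
    unfolding Rd_def Bl_def by blast
  let ?a = "Rd red u A ((i+2) mod 5)" and ?b = "Rd red u A ((i+3) mod 5)"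
    and ?c = "Bl red u A ((i+1) mod 5)" and ?d = "Bl red u A ((i+4) mod 5)"
  have ne1: "(i+2) mod 5 \<noteq> (i+3) mod 5" "(i+1) mod 5 \<noteq> (i+4) mod 5"
    using less5_cases[OF assms(3)] by fastforce+
  have f: "finite ?a" "finite ?b" "finite ?c" "finite ?d" using fin assms(3) by auto
  have e1: "?a \<inter> ?b = {}" using dRR[of "(i+2) mod 5" "(i+3) mod 5"] ne1 by simp
  have e2: "?c \<inter> ?d = {}" using dBB[of "(i+1) mod 5" "(i+4) mod 5"] ne1 by simp
  have e3: "?a \<inter> ?c = {}" "?b \<inter> ?c = {}" "?a \<inter> ?d = {}" "?b \<inter> ?d = {}" using dRB by auto
  have "card (?a \<union> ?b \<union> ?c \<union> ?d) = card (?a \<union> ?b \<union> ?c) + card ?d"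
    apply (rule card_Un_disjoint) using f e2 e3 by auto
  also have "card (?a \<union> ?b \<union> ?c) = card (?a \<union> ?b) + card ?c"
    apply (rule card_Un_disjoint) using f e3 by auto
  also have "card (?a \<union> ?b) = card ?a + card ?b"
    apply (rule card_Un_disjoint) using f e1 by auto
  finally show ?thesis unfolding W_def cst_def by simp
qed

lemma hitW:
  assumes "bad_configuration red A u S" "i < 5" "disj5 A"
  shows "S \<inter> W red u A i \<noteq> {}"
proof -
  obtain j a b c where j: "j < 5" and S: "S = {a,b,c}" and
    h: "(a \<in> A j \<and> b \<in> A ((j+2) mod 5) \<and> c \<in> A ((j+3) mod 5) \<and>
          red u a \<and> red u b \<and> red u c) \<or>
       (a \<in> A j \<and> b \<in> A ((j+1) mod 5) \<and> c \<in> A ((j+2) mod 5) \<and>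
          \<not> red u a \<and> \<not> red u b \<and> \<not> red u c)"
    using assms(1) unfolding bad_configuration_def by metis
  have m: "x \<in> W red u A i \<longleftrightarrow> (red u x \<and> (p = (i+2) mod 5 \<or> p = (i+3) mod 5)) \<or>
           (\<not> red u x \<and> (p = (i+1) mod 5 \<or> p = (i+4) mod 5))" if "p<5" "x \<in> A p" for p x
    using memW[OF assms(3) that assms(2)] .
  have "a \<in> W red u A i \<or> b \<in> W red u A i \<or> c \<in> W red u A i"
    using h
  proof
    assume hh: "a \<in> A j \<and> b \<in> A ((j+2) mod 5) \<and> c \<in> A ((j+3) mod 5) \<and>
          red u a \<and> red u b \<and> red u c"
    have ma: "a \<in> W red u A i \<longleftrightarrow> (j = (i+2) mod 5 \<or> j = (i+3) mod 5)"
      using m[of j a] hh j by auto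
    have mb: "b \<in> W red u A i \<longleftrightarrow> ((j+2) mod 5 = (i+2) mod 5 \<or> (j+2) mod 5 = (i+3) mod 5)"
      using m[of "(j+2) mod 5" b] hh by auto
    have mc: "c \<in> W red u A i \<longleftrightarrow> ((j+3) mod 5 = (i+2) mod 5 \<or> (j+3) mod 5 = (i+3) mod 5)"
      using m[of "(j+3) mod 5" c] hh by auto
    from less5_cases[OF j] less5_cases[OF assms(2)] show ?thesis unfolding ma mb mc
      by (elim disjE; simp)
  next
    assume hh: "a \<in> A j \<and> b \<in> A ((j+1) mod 5) \<and> c \<in> A ((j+2) mod 5) \<and>
          \<not> red u a \<and> \<not> red u b \<and> \<not> red u c"
    have ma: "a \<in> W red u A i \<longleftrightarrow> (j = (i+1) mod 5 \<or> j = (i+4) mod 5)"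
      using m[of j a] hh j by auto
    have mb: "b \<in> W red u A i \<longleftrightarrow> ((j+1) mod 5 = (i+1) mod 5 \<or> (j+1) mod 5 = (i+4) mod 5)"
      using m[of "(j+1) mod 5" b] hh by auto
    have mc: "c \<in> W red u A i \<longleftrightarrow> ((j+2) mod 5 = (i+1) mod 5 \<or> (j+2) mod 5 = (i+4) mod 5)"
      using m[of "(j+2) mod 5" c] hh by auto
    from less5_cases[OF j] less5_cases[OF assms(2)] show ?thesis unfolding ma mb mc
      by (elim disjE; simp)
  qed
  then show ?thesis using S by auto
qed

lemma lower_bound:
  assumes "disjoint_bad_family red A u F" "i < 5" "disj5 A" "finite (W red u A i)"
  shows "card F \<le> card (W red u A i)"
proof -
  define f where "f S = (SOME x. x \<in> S \<inter> W red u A i)" for S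
  have fS: "f S \<in> S \<inter> W red u A i" if "S \<in> F" for S
  proof -
    have "bad_configuration red A u S" using assms(1) that by (simp add: disjoint_bad_family_def)
    then have "S \<inter> W red u A i \<noteq> {}" by (rule hitW[OF _ assms(2) assms(3)])
    then show ?thesis unfolding f_def by (metis some_in_eq)
  qed
  have pw: "pairwise disjnt F" using assms(1) by (simp add: disjoint_bad_family_def)
  have "inj_on f F"
  proof (rule inj_onI)
    fix S T assume ST: "S \<in> F" "T \<in> F" "f S = f T"
    have "f S \<in> S \<inter> T" using fS[OF ST(1)] fS[OF ST(2)] ST(3) by auto
    show "S = T"
    proof (rule ccontr)
      assume "S \<noteq> T"
      then have "disjnt S T" using pw ST(1,2) by (simp add: pairwiseD)
      then show False using \<open>f S \<in> S \<inter> T\<close> by (simp add: disjnt_def)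
    qed
  qed
  moreover have "f ` F \<subseteq> W red u A i" using fS by auto
  ultimately show ?thesis by (rule card_inj_on_le[OF _ _ assms(4)])
qed

lemma card3:
  assumes "finite X"
  shows "card (X \<inter> {a,b,c}) \<le> (of_bool (a \<in> X) + of_bool (b \<in> X) + of_bool (c \<in> X) :: nat)"
proof -
  define Xa where "Xa = (if a \<in> X then {a} else {})"
  define Xb where "Xb = (if b \<in> X then {b} else {})"
  define Xc where "Xc = (if c \<in> X then {c} else {})"
  have "X \<inter> {a,b,c} = Xa \<union> Xb \<union> Xc" unfolding Xa_def Xb_def Xc_def by auto
  moreover have "card (Xa \<union> Xb \<union> Xc) \<le> card (Xa \<union> Xb) + card Xc" by (rule card_Un_le)
  moreover have "card (Xa \<union> Xb) \<le> card Xa + card Xb" by (rule card_Un_le)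
  moreover have "card Xa = of_bool (a \<in> X)" "card Xb = of_bool (b \<in> X)" "card Xc = of_bool (c \<in> X)"
    unfolding Xa_def Xb_def Xc_def by auto
  ultimately show ?thesis by (metis (no_types) add_le_mono1 le_trans)
qed

lemma badI_red:
  assumes "j < 5" "a \<in> A j" "b \<in> A ((j+2) mod 5)" "c \<in> A ((j+3) mod 5)" "red u a" "red u b" "red u c"
  shows "bad_configuration red A u {a,b,c}"
  unfolding bad_configuration_def using assms by blast

lemma badI_blue:
  assumes "j < 5" "a \<in> A j" "b \<in> A ((j+1) mod 5)" "c \<in> A ((j+2) mod 5)" "\<not> red u a" "\<not> red u b" "\<not> red u c"
  shows "bad_configuration red A u {a,b,c}"
  unfolding bad_configuration_def using assms by blast

lemma bad_mono:
  assumes "bad_configuration red A' u S" "\<forall>k. A' k \<subseteq> A k"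
  shows "bad_configuration red A u S"
proof -
  obtain j a b c where j: "j < 5" and S: "S = {a,b,c}" and
    h: "(a \<in> A' j \<and> b \<in> A' ((j+2) mod 5) \<and> c \<in> A' ((j+3) mod 5) \<and>
          red u a \<and> red u b \<and> red u c) \<or>
       (a \<in> A' j \<and> b \<in> A' ((j+1) mod 5) \<and> c \<in> A' ((j+2) mod 5) \<and>
          \<not> red u a \<and> \<not> red u b \<and> \<not> red u c)"
    using assms(1) unfolding bad_configuration_def by metis
  from h show ?thesis
  proof
    assume "a \<in> A' j \<and> b \<in> A' ((j+2) mod 5) \<and> c \<in> A' ((j+3) mod 5) \<and>
          red u a \<and> red u b \<and> red u c"
    then show ?thesis unfolding S using assms(2) by (intro badI_red[OF j]) auto
  next
    assume "a \<in> A' j \<and> b \<in> A' ((j+1) mod 5) \<and> c \<in> A' ((j+2) mod 5) \<and>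
          \<not> red u a \<and> \<not> red u b \<and> \<not> red u c"
    then show ?thesis unfolding S using assms(2) by (intro badI_blue[OF j]) auto
  qed
qed

lemma bad_sub:
  assumes "bad_configuration red A u S" "x \<in> S"
  shows "\<exists>k<5. x \<in> A k"
proof -
  obtain j a b c where j: "j < 5" and S: "S = {a,b,c}" and
    h: "(a \<in> A j \<and> b \<in> A ((j+2) mod 5) \<and> c \<in> A ((j+3) mod 5) \<and>
          red u a \<and> red u b \<and> red u c) \<or>
       (a \<in> A j \<and> b \<in> A ((j+1) mod 5) \<and> c \<in> A ((j+2) mod 5) \<and>
          \<not> red u a \<and> \<not> red u b \<and> \<not> red u c)"
    using assms(1) unfolding bad_configuration_def by metis
  have m: "(j+1) mod 5 < 5" "(j+2) mod 5 < 5" "(j+3) mod 5 < 5" by simp_all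
  obtain q1 q2 where q: "q1 < 5" "q2 < 5" "a \<in> A j" "b \<in> A q1" "c \<in> A q2"
    using h m by blast
  have "x = a \<or> x = b \<or> x = c" using assms(2) S by auto
  then show ?thesis using q j by blast
qed

lemma step:
  assumes fin: "\<forall>k<5. finite (A k)" and dj: "disj5 A"
   and pqw: "p<5" "q<5" "w<5" "p\<noteq>q" "q\<noteq>w" "p\<noteq>w"
   and abc: "a \<in> A p" "b \<in> A q" "c \<in> A w"
   and bad: "bad_configuration red A u {a,b,c}"
   and big: "\<forall>k<5. Suc s \<le> card (A k)"
   and cs: "\<forall>i<5. s + (of_bool (a \<in> W red u A i) + of_bool (b \<in> W red u A i) + of_bool (c \<in> W red u A i)) \<le> cst red u A i"
   and IH: "\<And>A'. \<forall>k::nat<5. finite (A' k) \<Longrightarrow> disj5 A' \<Longrightarrow> \<forall>k::nat<5. s \<le> card (A' k) \<Longrightarrow>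
              \<forall>i::nat<5. s \<le> cst red u A' i \<Longrightarrow> \<exists>F. disjoint_bad_family red A' u F \<and> card F = s"
  shows "\<exists>F. disjoint_bad_family red A u F \<and> card F = Suc s"
proof -
  define A' where "A' k = A k - {a,b,c}" for k
  have fin': "\<forall>k<5. finite (A' k)" using fin unfolding A'_def by auto
  have dj': "disj5 A'" unfolding disj5_def
  proof (intro allI impI)
    fix k l :: nat assume kl: "k < 5" "l < 5" "k \<noteq> l"
    then have "A k \<inter> A l = {}" using dj by (simp add: disj5_def)
    then show "A' k \<inter> A' l = {}" by (auto simp: A'_def)
  qed
  have memA: "x \<in> A k \<longleftrightarrow> k = r" if "k < 5" "r < 5" "x \<in> A r" for k r x
  proof
    assume "x \<in> A k"
    show "k = r"
    proof (rule ccontr)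
      assume "k \<noteq> r"
      then have "A k \<inter> A r = {}" using dj that by (simp add: disj5_def)
      then show False using \<open>x \<in> A k\<close> that(3) by blast
    qed
  next
    assume "k = r" then show "x \<in> A k" using that(3) by simp
  qed
  have big': "\<forall>k<5. s \<le> card (A' k)"
  proof (intro allI impI)
    fix k :: nat assume k: "k < 5"
    have "card (A' k) = card (A k) - card (A k \<inter> {a,b,c})"
      unfolding A'_def using fin k by (simp add: card_Diff_subset_Int)
    moreover have "card (A k \<inter> {a,b,c}) \<le> of_bool (a \<in> A k) + of_bool (b \<in> A k) + of_bool (c \<in> A k)"
      using card3[of "A k"] fin k by simp
    moreover have "of_bool (a \<in> A k) + of_bool (b \<in> A k) + of_bool (c \<in> A k) \<le> (1::nat)"
    proof -
      have "a \<in> A k \<longleftrightarrow> k = p" "b \<in> A k \<longleftrightarrow> k = q" "c \<in> A k \<longleftrightarrow> k = w"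
        using memA[OF k pqw(1) abc(1)] memA[OF k pqw(2) abc(2)] memA[OF k pqw(3) abc(3)] by simp_all
      then show ?thesis using pqw(4-6) by simp
    qed
    moreover have "Suc s \<le> card (A k)" using big k by simp
    ultimately show "s \<le> card (A' k)" by linarith
  qed
  have cs': "\<forall>i<5. s \<le> cst red u A' i"
  proof (intro allI impI)
    fix i :: nat assume i: "i < 5"
    have finW: "finite (W red u A i)" unfolding W_def Rd_def Bl_def using fin by auto
    have "W red u A' i = W red u A i - {a,b,c}" unfolding W_def Rd_def Bl_def A'_def by auto
    then have "card (W red u A' i) = card (W red u A i) - card (W red u A i \<inter> {a,b,c})"
      using finW by (simp add: card_Diff_subset_Int)
    moreover have "card (W red u A' i) = cst red u A' i" using card_W[OF dj' fin' i] .
    moreover have "card (W red u A i \<inter> {a,b,c}) \<le> of_bool (a \<in> W red u A i) + of_bool (b \<in> W red u A i) + of_bool (c \<in> W red u A i)"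
      using card3[of "W red u A i"] finW by simp
    moreover have "card (W red u A i) = cst red u A i" using card_W[OF dj fin i] .
    moreover have "s + (of_bool (a \<in> W red u A i) + of_bool (b \<in> W red u A i) + of_bool (c \<in> W red u A i)) \<le> cst red u A i"
      using cs i by blast
    ultimately show "s \<le> cst red u A' i" by linarith
  qed
  obtain F' where F': "disjoint_bad_family red A' u F'" "card F' = s" using IH[OF fin' dj' big' cs'] by blast
  have sub: "\<forall>k. A' k \<subseteq> A k" unfolding A'_def by auto
  have dis: "S \<inter> {a,b,c} = {}" if "S \<in> F'" for S
  proof -
    have "bad_configuration red A' u S" using F'(1) that by (simp add: disjoint_bad_family_def)
    then have "\<forall>x\<in>S. \<exists>k<5. x \<in> A' k" using bad_sub[of red A' u S] by blast
    then show ?thesis unfolding A'_def by blast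
  qed
  have notin: "{a,b,c} \<notin> F'"
  proof
    assume "{a,b,c} \<in> F'"
    then have "{a,b,c} \<inter> {a,b,c} = {}" by (rule dis)
    then show False by simp
  qed
  define F where "F = insert {a,b,c} F'"
  have "disjoint_bad_family red A u F"
    unfolding disjoint_bad_family_def F_def
  proof (intro conjI)
    show "finite (insert {a, b, c} F')" using F'(1) unfolding disjoint_bad_family_def by simp
    have "\<forall>S\<in>F'. bad_configuration red A' u S" using F'(1) by (simp add: disjoint_bad_family_def)
    then show "\<forall>S\<in>insert {a, b, c} F'. bad_configuration red A u S"
      using bad bad_mono[OF _ sub] by blast
    have pw: "pairwise disjnt F'" using F'(1) by (simp add: disjoint_bad_family_def)
    show "pairwise disjnt (insert {a, b, c} F')"
      unfolding pairwise_insert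
    proof (intro conjI allI impI pw)
      fix y assume "y \<in> F' \<and> y \<noteq> {a,b,c}"
      then have "y \<inter> {a,b,c} = {}" using dis by blast
      then show "disjnt {a, b, c} y" "disjnt y {a, b, c}" unfolding disjnt_def by blast+
    qed
  qed
  moreover have "card F = Suc s" unfolding F_def using F' notin
    unfolding disjoint_bad_family_def by simp
  ultimately show ?thesis by blast
qed


lemma distinct_mods: "(j::nat) < 5 \<Longrightarrow> j \<noteq> (j+2) mod 5 \<and> (j+2) mod 5 \<noteq> (j+3) mod 5 \<and> j \<noteq> (j+3) mod 5 \<and>
   j \<noteq> (j+1) mod 5 \<and> (j+1) mod 5 \<noteq> (j+2) mod 5 \<and> j \<noteq> (j+2) mod 5"
  by (drule less5_cases) (elim disjE; simp)

lemma hits_red: "(i::nat) < 5 \<Longrightarrow> j < 5 \<Longrightarrow>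
  of_bool (j = (i+2) mod 5 \<or> j = (i+3) mod 5) + of_bool ((j+2) mod 5 = (i+2) mod 5 \<or> (j+2) mod 5 = (i+3) mod 5)
  + of_bool ((j+3) mod 5 = (i+2) mod 5 \<or> (j+3) mod 5 = (i+3) mod 5) \<le> (if i = j then 2 else (1::nat))"
  by (drule less5_cases, drule less5_cases) (elim disjE; simp)

lemma hits_blue: "(i::nat) < 5 \<Longrightarrow> j < 5 \<Longrightarrow>
  of_bool (j = (i+1) mod 5 \<or> j = (i+4) mod 5) + of_bool ((j+1) mod 5 = (i+1) mod 5 \<or> (j+1) mod 5 = (i+4) mod 5)
  + of_bool ((j+2) mod 5 = (i+1) mod 5 \<or> (j+2) mod 5 = (i+4) mod 5) \<le> (if i = (j+1) mod 5 then 2 else (1::nat))"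
  by (drule less5_cases, drule less5_cases) (elim disjE; simp)

lemma redtype:
  assumes fin: "\<forall>k<5. finite (A k)" and dj: "disj5 A" and j: "j < 5"
   and pos: "0 < card (Rd red u A j)" "0 < card (Rd red u A ((j+2) mod 5))" "0 < card (Rd red u A ((j+3) mod 5))"
   and cj: "Suc s + 1 \<le> cst red u A j"
   and big: "\<forall>k<5. Suc s \<le> card (A k)"
   and call: "\<forall>i<5. Suc s \<le> cst red u A i"
   and IH: "\<And>A'. \<forall>k::nat<5. finite (A' k) \<Longrightarrow> disj5 A' \<Longrightarrow> \<forall>k::nat<5. s \<le> card (A' k) \<Longrightarrow>
              \<forall>i::nat<5. s \<le> cst red u A' i \<Longrightarrow> \<exists>F. disjoint_bad_family red A' u F \<and> card F = s"
  shows "\<exists>F. disjoint_bad_family red A u F \<and> card F = Suc s"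
proof -
  obtain a where a: "a \<in> A j" "red u a" using pos(1) unfolding Rd_def by (metis (mono_tags, lifting) card_gt_0_iff ex_in_conv mem_Collect_eq)
  obtain b where b: "b \<in> A ((j+2) mod 5)" "red u b" using pos(2) unfolding Rd_def by (metis (mono_tags, lifting) card_gt_0_iff ex_in_conv mem_Collect_eq)
  obtain c where c: "c \<in> A ((j+3) mod 5)" "red u c" using pos(3) unfolding Rd_def by (metis (mono_tags, lifting) card_gt_0_iff ex_in_conv mem_Collect_eq)
  have d: "j \<noteq> (j+2) mod 5" "(j+2) mod 5 \<noteq> (j+3) mod 5" "j \<noteq> (j+3) mod 5" using distinct_mods[OF j] by auto
  have m5: "(j+2) mod 5 < 5" "(j+3) mod 5 < 5" by simp_all
  have cs: "\<forall>i<5. s + (of_bool (a \<in> W red u A i) + of_bool (b \<in> W red u A i) + of_bool (c \<in> W red u A i)) \<le> cst red u A i"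
  proof (intro allI impI)
    fix i :: nat assume i: "i < 5"
    have "a \<in> W red u A i \<longleftrightarrow> (j = (i+2) mod 5 \<or> j = (i+3) mod 5)" using memW[OF dj j a(1) i] a(2) by simp
    moreover have "b \<in> W red u A i \<longleftrightarrow> ((j+2) mod 5 = (i+2) mod 5 \<or> (j+2) mod 5 = (i+3) mod 5)" using memW[OF dj m5(1) b(1) i] b(2) by simp
    moreover have "c \<in> W red u A i \<longleftrightarrow> ((j+3) mod 5 = (i+2) mod 5 \<or> (j+3) mod 5 = (i+3) mod 5)" using memW[OF dj m5(2) c(1) i] c(2) by simp
    ultimately have h: "of_bool (a \<in> W red u A i) + of_bool (b \<in> W red u A i) + of_bool (c \<in> W red u A i) \<le> (if i = j then 2 else (1::nat))"
      using hits_red[OF i j] by simp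
    have "Suc s \<le> cst red u A i" using call i by simp
    then show "s + (of_bool (a \<in> W red u A i) + of_bool (b \<in> W red u A i) + of_bool (c \<in> W red u A i)) \<le> cst red u A i"
      using h cj by (cases "i = j") auto
  qed
  show ?thesis
    by (rule step[OF fin dj j m5(1) m5(2) d(1) d(2) d(3) a(1) b(1) c(1) badI_red[where A=A and red=red and u=u, OF j a(1) b(1) c(1) a(2) b(2) c(2)] big cs IH])
qed

lemma bluetype:
  assumes fin: "\<forall>k<5. finite (A k)" and dj: "disj5 A" and j: "j < 5"
   and pos: "0 < card (Bl red u A j)" "0 < card (Bl red u A ((j+1) mod 5))" "0 < card (Bl red u A ((j+2) mod 5))"
   and cj: "Suc s + 1 \<le> cst red u A ((j+1) mod 5)"
   and big: "\<forall>k<5. Suc s \<le> card (A k)"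
   and call: "\<forall>i<5. Suc s \<le> cst red u A i"
   and IH: "\<And>A'. \<forall>k::nat<5. finite (A' k) \<Longrightarrow> disj5 A' \<Longrightarrow> \<forall>k::nat<5. s \<le> card (A' k) \<Longrightarrow>
              \<forall>i::nat<5. s \<le> cst red u A' i \<Longrightarrow> \<exists>F. disjoint_bad_family red A' u F \<and> card F = s"
  shows "\<exists>F. disjoint_bad_family red A u F \<and> card F = Suc s"
proof -
  obtain a where a: "a \<in> A j" "\<not> red u a" using pos(1) unfolding Bl_def by (metis (mono_tags, lifting) card_gt_0_iff ex_in_conv mem_Collect_eq)
  obtain b where b: "b \<in> A ((j+1) mod 5)" "\<not> red u b" using pos(2) unfolding Bl_def by (metis (mono_tags, lifting) card_gt_0_iff ex_in_conv mem_Collect_eq)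
  obtain c where c: "c \<in> A ((j+2) mod 5)" "\<not> red u c" using pos(3) unfolding Bl_def by (metis (mono_tags, lifting) card_gt_0_iff ex_in_conv mem_Collect_eq)
  have d: "j \<noteq> (j+1) mod 5" "(j+1) mod 5 \<noteq> (j+2) mod 5" "j \<noteq> (j+2) mod 5" using distinct_mods[OF j] by auto
  have m5: "(j+1) mod 5 < 5" "(j+2) mod 5 < 5" by simp_all
  have cs: "\<forall>i<5. s + (of_bool (a \<in> W red u A i) + of_bool (b \<in> W red u A i) + of_bool (c \<in> W red u A i)) \<le> cst red u A i"
  proof (intro allI impI)
    fix i :: nat assume i: "i < 5"
    have "a \<in> W red u A i \<longleftrightarrow> (j = (i+1) mod 5 \<or> j = (i+4) mod 5)" using memW[OF dj j a(1) i] a(2) by simp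
    moreover have "b \<in> W red u A i \<longleftrightarrow> ((j+1) mod 5 = (i+1) mod 5 \<or> (j+1) mod 5 = (i+4) mod 5)" using memW[OF dj m5(1) b(1) i] b(2) by simp
    moreover have "c \<in> W red u A i \<longleftrightarrow> ((j+2) mod 5 = (i+1) mod 5 \<or> (j+2) mod 5 = (i+4) mod 5)" using memW[OF dj m5(2) c(1) i] c(2) by simp
    ultimately have h: "of_bool (a \<in> W red u A i) + of_bool (b \<in> W red u A i) + of_bool (c \<in> W red u A i) \<le> (if i = (j+1) mod 5 then 2 else (1::nat))"
      using hits_blue[OF i j] by simp
    have "Suc s \<le> cst red u A i" using call i by simp
    then show "s + (of_bool (a \<in> W red u A i) + of_bool (b \<in> W red u A i) + of_bool (c \<in> W red u A i)) \<le> cst red u A i"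
      using h cj by (cases "i = (j+1) mod 5") auto
  qed
  show ?thesis
    by (rule step[OF fin dj j m5(1) m5(2) d(1) d(2) d(3) a(1) b(1) c(1) badI_blue[where A=A and red=red and u=u, OF j a(1) b(1) c(1) a(2) b(2) c(2)] big cs IH])
qed


lemma card_split:
  assumes "\<forall>k<5. finite (A k)" "disj5 A" "k < 5"
  shows "card (A k) = card (Rd red u A k) + card (Bl red u A k)"
proof -
  have "A k = Rd red u A k \<union> Bl red u A k" unfolding Rd_def Bl_def by auto
  moreover have "Rd red u A k \<inter> Bl red u A k = {}" unfolding Rd_def Bl_def by auto
  moreover have "finite (Rd red u A k)" "finite (Bl red u A k)" using assms unfolding Rd_def Bl_def by auto
  ultimately show ?thesis using card_Un_disjoint[of "Rd red u A k" "Bl red u A k"] by simp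
qed

lemma pack:
  assumes "\<forall>k<5. finite (A k)" "disj5 A" "\<forall>k<5. s \<le> card (A k)" "\<forall>i<5. s \<le> cst red u A i"
  shows "\<exists>F. disjoint_bad_family red A u F \<and> card F = s"
  using assms
proof (induction s arbitrary: A)
  case 0
  have "disjoint_bad_family red A u {}" unfolding disjoint_bad_family_def by simp
  then show ?case by (intro exI[of _ "{}"]) simp
next
  case (Suc s)
  have fin: "\<forall>k<5. finite (A k)" and dj: "disj5 A" using Suc.prems by auto
  have IH': "\<And>A'. \<forall>k::nat<5. finite (A' k) \<Longrightarrow> disj5 A' \<Longrightarrow> \<forall>k::nat<5. s \<le> card (A' k) \<Longrightarrow>
              \<forall>i::nat<5. s \<le> cst red u A' i \<Longrightarrow> \<exists>F. disjoint_bad_family red A' u F \<and> card F = s"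
    by (rule Suc.IH)
  show ?case
  proof (rule ccontr)
    assume no: "\<not> ?case"
    define r where "r k = card (Rd red u A k)" for k
    define b where "b k = card (Bl red u A k)" for k
    have C0: "cst red u A 0 = r 2 + r 3 + b 1 + b 4" unfolding cst_def r_def b_def by (simp add: numeral_2_eq_2)
    have D0: "Suc s \<le> r 2 + r 3 + b 1 + b 4" using spec[OF Suc.prems(4), of 0] C0 by simp
    have N0: "Suc s \<le> r 0 + b 0" using spec[OF Suc.prems(3), of 0] card_split[OF fin dj, of 0] by (simp add: r_def b_def)
    have C1: "cst red u A 1 = r 3 + r 4 + b 2 + b 0" unfolding cst_def r_def b_def by (simp add: numeral_2_eq_2)
    have D1: "Suc s \<le> r 3 + r 4 + b 2 + b 0" using spec[OF Suc.prems(4), of 1] C1 by simp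
    have N1: "Suc s \<le> r 1 + b 1" using spec[OF Suc.prems(3), of 1] card_split[OF fin dj, of 1] by (simp add: r_def b_def)
    have C2: "cst red u A 2 = r 4 + r 0 + b 3 + b 1" unfolding cst_def r_def b_def by (simp add: numeral_2_eq_2)
    have D2: "Suc s \<le> r 4 + r 0 + b 3 + b 1" using spec[OF Suc.prems(4), of 2] C2 by simp
    have N2: "Suc s \<le> r 2 + b 2" using spec[OF Suc.prems(3), of 2] card_split[OF fin dj, of 2] by (simp add: r_def b_def)
    have C3: "cst red u A 3 = r 0 + r 1 + b 4 + b 2" unfolding cst_def r_def b_def by (simp add: numeral_2_eq_2)
    have D3: "Suc s \<le> r 0 + r 1 + b 4 + b 2" using spec[OF Suc.prems(4), of 3] C3 by simp
    have N3: "Suc s \<le> r 3 + b 3" using spec[OF Suc.prems(3), of 3] card_split[OF fin dj, of 3] by (simp add: r_def b_def)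
    have C4: "cst red u A 4 = r 1 + r 2 + b 0 + b 3" unfolding cst_def r_def b_def by (simp add: numeral_2_eq_2)
    have D4: "Suc s \<le> r 1 + r 2 + b 0 + b 3" using spec[OF Suc.prems(4), of 4] C4 by simp
    have N4: "Suc s \<le> r 4 + b 4" using spec[OF Suc.prems(3), of 4] card_split[OF fin dj, of 4] by (simp add: r_def b_def)
    have R0: "0 < r 0 \<and> 0 < r 2 \<and> 0 < r 3 \<longrightarrow> r 2 + r 3 + b 1 + b 4 \<le> Suc s"
    proof (rule impI, rule ccontr)
      assume h: "0 < r 0 \<and> 0 < r 2 \<and> 0 < r 3" and nh: "\<not> r 2 + r 3 + b 1 + b 4 \<le> Suc s"
      have "\<exists>F. disjoint_bad_family red A u F \<and> card F = Suc s"
        by (rule redtype[where j=0, OF fin dj _ _ _ _ _ Suc.prems(3,4) IH']) (use h nh C0 in \<open>simp_all add: r_def numeral_2_eq_2\<close>)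
      then show False using no by blast
    qed
    have B0: "0 < b 0 \<and> 0 < b 1 \<and> 0 < b 2 \<longrightarrow> r 3 + r 4 + b 2 + b 0 \<le> Suc s"
    proof (rule impI, rule ccontr)
      assume h: "0 < b 0 \<and> 0 < b 1 \<and> 0 < b 2" and nh: "\<not> r 3 + r 4 + b 2 + b 0 \<le> Suc s"
      have "\<exists>F. disjoint_bad_family red A u F \<and> card F = Suc s"
        by (rule bluetype[where j=0, OF fin dj _ _ _ _ _ Suc.prems(3,4) IH']) (use h nh C1 in \<open>simp_all add: b_def numeral_2_eq_2\<close>)
      then show False using no by blast
    qed
    have R1: "0 < r 1 \<and> 0 < r 3 \<and> 0 < r 4 \<longrightarrow> r 3 + r 4 + b 2 + b 0 \<le> Suc s"
    proof (rule impI, rule ccontr)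
      assume h: "0 < r 1 \<and> 0 < r 3 \<and> 0 < r 4" and nh: "\<not> r 3 + r 4 + b 2 + b 0 \<le> Suc s"
      have "\<exists>F. disjoint_bad_family red A u F \<and> card F = Suc s"
        by (rule redtype[where j=1, OF fin dj _ _ _ _ _ Suc.prems(3,4) IH']) (use h nh C1 in \<open>simp_all add: r_def numeral_2_eq_2\<close>)
      then show False using no by blast
    qed
    have B1: "0 < b 1 \<and> 0 < b 2 \<and> 0 < b 3 \<longrightarrow> r 4 + r 0 + b 3 + b 1 \<le> Suc s"
    proof (rule impI, rule ccontr)
      assume h: "0 < b 1 \<and> 0 < b 2 \<and> 0 < b 3" and nh: "\<not> r 4 + r 0 + b 3 + b 1 \<le> Suc s"
      have "\<exists>F. disjoint_bad_family red A u F \<and> card F = Suc s"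
        by (rule bluetype[where j=1, OF fin dj _ _ _ _ _ Suc.prems(3,4) IH']) (use h nh C2 in \<open>simp_all add: b_def numeral_2_eq_2\<close>)
      then show False using no by blast
    qed
    have R2: "0 < r 2 \<and> 0 < r 4 \<and> 0 < r 0 \<longrightarrow> r 4 + r 0 + b 3 + b 1 \<le> Suc s"
    proof (rule impI, rule ccontr)
      assume h: "0 < r 2 \<and> 0 < r 4 \<and> 0 < r 0" and nh: "\<not> r 4 + r 0 + b 3 + b 1 \<le> Suc s"
      have "\<exists>F. disjoint_bad_family red A u F \<and> card F = Suc s"
        by (rule redtype[where j=2, OF fin dj _ _ _ _ _ Suc.prems(3,4) IH']) (use h nh C2 in \<open>simp_all add: r_def numeral_2_eq_2\<close>)
      then show False using no by blast
    qed
    have B2: "0 < b 2 \<and> 0 < b 3 \<and> 0 < b 4 \<longrightarrow> r 0 + r 1 + b 4 + b 2 \<le> Suc s"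
    proof (rule impI, rule ccontr)
      assume h: "0 < b 2 \<and> 0 < b 3 \<and> 0 < b 4" and nh: "\<not> r 0 + r 1 + b 4 + b 2 \<le> Suc s"
      have "\<exists>F. disjoint_bad_family red A u F \<and> card F = Suc s"
        by (rule bluetype[where j=2, OF fin dj _ _ _ _ _ Suc.prems(3,4) IH']) (use h nh C3 in \<open>simp_all add: b_def numeral_2_eq_2\<close>)
      then show False using no by blast
    qed
    have R3: "0 < r 3 \<and> 0 < r 0 \<and> 0 < r 1 \<longrightarrow> r 0 + r 1 + b 4 + b 2 \<le> Suc s"
    proof (rule impI, rule ccontr)
      assume h: "0 < r 3 \<and> 0 < r 0 \<and> 0 < r 1" and nh: "\<not> r 0 + r 1 + b 4 + b 2 \<le> Suc s"
      have "\<exists>F. disjoint_bad_family red A u F \<and> card F = Suc s"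
        by (rule redtype[where j=3, OF fin dj _ _ _ _ _ Suc.prems(3,4) IH']) (use h nh C3 in \<open>simp_all add: r_def numeral_2_eq_2\<close>)
      then show False using no by blast
    qed
    have B3: "0 < b 3 \<and> 0 < b 4 \<and> 0 < b 0 \<longrightarrow> r 1 + r 2 + b 0 + b 3 \<le> Suc s"
    proof (rule impI, rule ccontr)
      assume h: "0 < b 3 \<and> 0 < b 4 \<and> 0 < b 0" and nh: "\<not> r 1 + r 2 + b 0 + b 3 \<le> Suc s"
      have "\<exists>F. disjoint_bad_family red A u F \<and> card F = Suc s"
        by (rule bluetype[where j=3, OF fin dj _ _ _ _ _ Suc.prems(3,4) IH']) (use h nh C4 in \<open>simp_all add: b_def numeral_2_eq_2\<close>)
      then show False using no by blast
    qed
    have R4: "0 < r 4 \<and> 0 < r 1 \<and> 0 < r 2 \<longrightarrow> r 1 + r 2 + b 0 + b 3 \<le> Suc s"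
    proof (rule impI, rule ccontr)
      assume h: "0 < r 4 \<and> 0 < r 1 \<and> 0 < r 2" and nh: "\<not> r 1 + r 2 + b 0 + b 3 \<le> Suc s"
      have "\<exists>F. disjoint_bad_family red A u F \<and> card F = Suc s"
        by (rule redtype[where j=4, OF fin dj _ _ _ _ _ Suc.prems(3,4) IH']) (use h nh C4 in \<open>simp_all add: r_def numeral_2_eq_2\<close>)
      then show False using no by blast
    qed
    have B4: "0 < b 4 \<and> 0 < b 0 \<and> 0 < b 1 \<longrightarrow> r 2 + r 3 + b 1 + b 4 \<le> Suc s"
    proof (rule impI, rule ccontr)
      assume h: "0 < b 4 \<and> 0 < b 0 \<and> 0 < b 1" and nh: "\<not> r 2 + r 3 + b 1 + b 4 \<le> Suc s"
      have "\<exists>F. disjoint_bad_family red A u F \<and> card F = Suc s"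
        by (rule bluetype[where j=4, OF fin dj _ _ _ _ _ Suc.prems(3,4) IH']) (use h nh C0 in \<open>simp_all add: b_def numeral_2_eq_2\<close>)
      then show False using no by blast
    qed
    show False
      by (rule arith_core[where s="Suc s" and ra="r 0" and rb="r 1" and rc="r 2" and rd="r 3" and re="r 4" and ba="b 0" and bb="b 1" and bc="b 2" and bd="b 3" and be="b 4"]) (use N0 N1 N2 N3 N4 D0 D1 D2 D3 D4 R0 R1 R2 R3 R4 B0 B1 B2 B3 B4 in simp_all)
  qed
qed


lemma mod_inj5: "(i::nat) < 5 \<Longrightarrow> j < 5 \<Longrightarrow> l < 5 \<Longrightarrow> (i + j) mod 5 = (i + l) mod 5 \<Longrightarrow> j = l"
  by (drule less5_cases, drule less5_cases, drule less5_cases) (elim disjE; simp)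

lemma mod_step: "((i + p) mod 5 + k) mod 5 = (i + (p + k) mod 5) mod 5" for i p k :: nat
  by (simp add: mod_add_left_eq mod_add_right_eq add.assoc)

lemma weI1: "p < 5 \<Longrightarrow> x \<in> B p \<Longrightarrow> y \<in> B ((p+1) mod 5) \<Longrightarrow> \<not> red x y \<Longrightarrow> {x,y} \<in> wrong_edges red B"
  unfolding wrong_edges_def by blast

lemma weI2: "p < 5 \<Longrightarrow> x \<in> B p \<Longrightarrow> y \<in> B ((p+2) mod 5) \<Longrightarrow> red x y \<Longrightarrow> {x,y} \<in> wrong_edges red B"
  unfolding wrong_edges_def by blast

lemma wrong_eq:
  fixes V :: "'a set" and red and u and A :: "nat \<Rightarrow> 'a set" and i :: nat
  defines "B \<equiv> (\<lambda>j. if j = 0 then A i \<union> {u} else A ((i + j) mod 5))"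
  assumes i: "i < 5"
    and uA: "\<forall>k<5. u \<notin> A k"
    and AV: "\<forall>k<5. A k \<subseteq> V" and uV: "u \<in> V"
    and sym: "\<forall>x\<in>V. \<forall>y\<in>V. red x y = red y x"
    and r1: "\<forall>m<5. \<forall>x\<in>A m. \<forall>y\<in>A ((m+1) mod 5). red x y"
    and r2: "\<forall>m<5. \<forall>x\<in>A m. \<forall>y\<in>A ((m+2) mod 5). \<not> red x y"
  shows "wrong_edges red B = (\<lambda>x. {u, x}) ` W red u A i"
proof -
  have Bmem: "z \<in> B q \<longleftrightarrow> (q = 0 \<and> z = u) \<or> z \<in> A ((i + q) mod 5)" if "q < 5" for q z
    using i unfolding B_def by auto
  have uB: "u \<in> B q \<longleftrightarrow> q = 0" if "q < 5" for q
    using Bmem[OF that] uA by auto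
  have Wmem: "z \<in> W red u A i \<longleftrightarrow> (z \<in> A ((i+2) mod 5) \<and> red u z) \<or> (z \<in> A ((i+3) mod 5) \<and> red u z) \<or>
       (z \<in> A ((i+1) mod 5) \<and> \<not> red u z) \<or> (z \<in> A ((i+4) mod 5) \<and> \<not> red u z)" for z
    unfolding W_def Rd_def Bl_def by auto
  have symA: "red x u = red u x" if "x \<in> A k" "k < 5" for x k
    using sym AV uV that by blast
  have m5: "(i + q) mod 5 < 5" for q by simp
  show ?thesis
  proof (rule set_eqI, rule iffI)
    fix e assume "e \<in> wrong_edges red B"
    then obtain x y p where e: "e = {x,y}" and p: "p < 5" and
      h: "(x \<in> B p \<and> y \<in> B ((p+1) mod 5) \<and> \<not> red x y) \<or> (x \<in> B p \<and> y \<in> B ((p+2) mod 5) \<and> red x y)"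
      unfolding wrong_edges_def by blast
    have p1: "(p+1) mod 5 < 5" "(p+2) mod 5 < 5" by simp_all
    show "e \<in> (\<lambda>x. {u, x}) ` W red u A i"
    proof (cases "x = u")
      case True
      then have p0: "p = 0" using h uB[OF p] by blast
      then have hy: "(y \<in> A ((i+1) mod 5) \<and> \<not> red u y) \<or> (y \<in> A ((i+2) mod 5) \<and> red u y)"
        using h True Bmem[OF p1(1), of y] Bmem[OF p1(2), of y] by auto
      then have "y \<in> W red u A i" using Wmem by blast
      then show ?thesis using e True by blast
    next
      case xu: False
      have xA: "x \<in> A ((i+p) mod 5)" using h Bmem[OF p, of x] xu by blast
      show ?thesis
      proof (cases "y = u")
        case True
        have "(p + 1) mod 5 = 0 \<and> \<not> red x u \<or> (p + 2) mod 5 = 0 \<and> red x u"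
          using h True uB[OF p1(1)] uB[OF p1(2)] by blast
        moreover have "(p + 1) mod 5 = 0 \<Longrightarrow> p = 4" using p by presburger
        moreover have "(p + 2) mod 5 = 0 \<Longrightarrow> p = 3" using p by presburger
        ultimately have "(p = 4 \<and> \<not> red u x) \<or> (p = 3 \<and> red u x)"
          using symA[OF xA m5] by auto
        then have "x \<in> W red u A i" using Wmem xA by auto
        moreover have "e = {u, x}" using e True by blast
        ultimately show ?thesis by blast
      next
        case yu: False
        show ?thesis
        proof -
          have "(y \<in> A ((i + (p+1) mod 5) mod 5) \<and> \<not> red x y) \<or> (y \<in> A ((i + (p+2) mod 5) mod 5) \<and> red x y)"
            using h Bmem[OF p1(1), of y] Bmem[OF p1(2), of y] yu by blast
          then have "(y \<in> A (((i + p) mod 5 + 1) mod 5) \<and> \<not> red x y) \<or> (y \<in> A (((i + p) mod 5 + 2) mod 5) \<and> red x y)"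
            by (simp only: mod_step)
          then have False using r1 r2 xA m5 by blast
          then show ?thesis ..
        qed
      qed
    qed
  next
    fix e assume "e \<in> (\<lambda>x. {u, x}) ` W red u A i"
    then obtain z where e: "e = {u, z}" and z: "z \<in> W red u A i" by blast
    have b0: "u \<in> B 0" using uB by simp
    have bq: "z \<in> A ((i + q) mod 5) \<Longrightarrow> z \<in> B q" if "q < 5" for q using Bmem[OF that] by blast
    from z Wmem consider
        "z \<in> A ((i+2) mod 5)" "red u z" | "z \<in> A ((i+3) mod 5)" "red u z"
      | "z \<in> A ((i+1) mod 5)" "\<not> red u z" | "z \<in> A ((i+4) mod 5)" "\<not> red u z" by blast
    then show "e \<in> wrong_edges red B"
    proof cases
      case 1
      then have "z \<in> B 2" using bq[of 2] by simp
      then show ?thesis unfolding e using weI2[where p=0 and x=u and y=z and B=B and red=red] b0 1 by (simp add: numeral_2_eq_2)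
    next
      case 2
      then have "z \<in> B 3" using bq[of 3] by simp
      moreover have "red z u" using 2 symA[of z "(i+3) mod 5"] by simp
      moreover have "{u, z} = {z, u}" by blast
      ultimately show ?thesis unfolding e using weI2[where p=3 and x=z and y=u and B=B and red=red] b0 by simp
    next
      case 3
      then have "z \<in> B 1" using bq[of 1] by simp
      then show ?thesis unfolding e using weI1[where p=0 and x=u and y=z and B=B and red=red] b0 3 by simp
    next
      case 4
      then have "z \<in> B 4" using bq[of 4] by simp
      moreover have "\<not> red z u" using 4 symA[of z "(i+4) mod 5"] by simp
      moreover have "{u, z} = {z, u}" by blast
      ultimately show ?thesis unfolding e using weI1[where p=4 and x=z and y=u and B=B and red=red] b0 by simp
    qed
  qed
qed


theorem proposition7p11:
  fixes V :: "'a set" and red :: "'a \<Rightarrow> 'a \<Rightarrow> bool" and u :: 'a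
    and A :: "nat \<Rightarrow> 'a set" and t :: nat
  assumes col: "red_blue_colouring V red"
    and uV: "u \<in> V"
    and Asub: "\<forall>i<5. A i \<subseteq> V - {u}"
    and blow: "pentagon_blowup V red A"
    and tfam: "\<exists>F. disjoint_bad_family red A u F \<and> card F = t"
    and nofam: "\<not> (\<exists>F. disjoint_bad_family red A u F \<and> card F = t + 1)"
    and tsmall: "\<forall>i<5. t < card (A i)"
  shows "\<exists>i<5. flips_away V red
            (\<lambda>j. if j = 0 then A i \<union> {u} else A ((i + j) mod 5)) t"
proof -
  have finV: "finite V" and sym: "\<forall>x\<in>V. \<forall>y\<in>V. red x y = red y x"
    using col unfolding red_blue_colouring_def by auto
  have po: "parts_ok V A" using blow unfolding pentagon_blowup_def by simp
  have r1: "\<forall>m<5. \<forall>x\<in>A m. \<forall>y\<in>A ((m+1) mod 5). red x y"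
    and r2: "\<forall>m<5. \<forall>x\<in>A m. \<forall>y\<in>A ((m+2) mod 5). \<not> red x y"
    using blow unfolding pentagon_blowup_def by auto
  have Ane: "\<forall>k<5. A k \<noteq> {}" and AV: "\<forall>k<5. A k \<subseteq> V" using po unfolding parts_ok_def by auto
  have dj: "disj5 A" using po unfolding parts_ok_def disj5_def by auto
  have fin: "\<forall>k<5. finite (A k)" using AV finV finite_subset by blast
  have uA: "\<forall>k<5. u \<notin> A k" using Asub by blast
  obtain F0 where F0: "disjoint_bad_family red A u F0" "card F0 = t" using tfam by blast
  have finW: "finite (W red u A i)" for i unfolding W_def Rd_def Bl_def using fin by auto
  have lb: "t \<le> cst red u A i" if i: "i < 5" for i
    using lower_bound[OF F0(1) i dj finW] card_W[OF dj fin i] F0(2) by simp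
  have "\<exists>i<5. cst red u A i \<le> t"
  proof (rule ccontr)
    assume "\<not> ?thesis"
    then have c: "\<forall>i<5. Suc t \<le> cst red u A i" by auto
    have big: "\<forall>k<5. Suc t \<le> card (A k)" using tsmall by auto
    obtain F where "disjoint_bad_family red A u F" "card F = Suc t" using pack[OF fin dj big c] by blast
    then show False using nofam by simp
  qed
  then obtain i where i: "i < 5" and ci: "cst red u A i \<le> t" by blast
  then have cit: "cst red u A i = t" using lb[OF i] by simp
  define B where "B = (\<lambda>j. if j = 0 then A i \<union> {u} else A ((i + j) mod 5))"
  have Bmem: "z \<in> B q \<longleftrightarrow> (q = 0 \<and> z = u) \<or> z \<in> A ((i + q) mod 5)" if "q < 5" for q z
    using i unfolding B_def by auto
  have m5: "(i + q) mod 5 < 5" for q by simp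
  have "parts_ok V B"
    unfolding parts_ok_def
  proof (intro conjI allI impI)
    fix j :: nat assume j: "j < 5"
    show "B j \<noteq> {}" using Ane m5 i unfolding B_def by auto
    show "B j \<subseteq> V" using AV m5 i uV unfolding B_def by auto
  next
    fix j l :: nat assume jl: "j < 5" "l < 5" "j \<noteq> l"
    show "B j \<inter> B l = {}"
    proof (rule ccontr)
      assume "B j \<inter> B l \<noteq> {}"
      then obtain z where z: "z \<in> B j" "z \<in> B l" by blast
      show False
      proof (cases "z = u")
        case True
        then have "j = 0" "l = 0" using z Bmem[OF jl(1)] Bmem[OF jl(2)] uA m5 by blast+
        then show False using jl by simp
      next
        case False
        then have "z \<in> A ((i + j) mod 5)" "z \<in> A ((i + l) mod 5)" using z Bmem[OF jl(1)] Bmem[OF jl(2)] by auto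
        then have "(i + j) mod 5 = (i + l) mod 5" using dj m5 unfolding disj5_def by blast
        then show False using mod_inj5[OF i jl(1) jl(2)] jl(3) by blast
      qed
    qed
  qed
  moreover have "card (wrong_edges red B) = t"
  proof -
    have "wrong_edges red B = (\<lambda>x. {u, x}) ` W red u A i"
      unfolding B_def by (rule wrong_eq[OF i uA AV uV sym r1 r2])
    moreover have "inj_on (\<lambda>x. {u, x}) (W red u A i)"
      unfolding inj_on_def by (auto simp: doubleton_eq_iff)
    ultimately have "card (wrong_edges red B) = card (W red u A i)" by (simp add: card_image)
    then show ?thesis using card_W[OF dj fin i] cit by simp
  qed
  ultimately have "flips_away V red B t" unfolding flips_away_def by simp
  then show ?thesis using i unfolding B_def by blast
qed

end
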